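(* Let $C$ be a choice function. Then $C$ is consistent if and only if $\emptyset\notin\mathrm{Ex}(\mathcal{A}_C)$. Moreover, if $C$ is consistent, then $C_{\mathrm{Ex}(\mathcal{A}_C)}(A)=\mathrm{Ex}(C)(A)$ for all $A\in\mathscr{Q}$.
   Context: Let $\mathcal{X}$ be a nonempty set and let $\mathscr{V}$ be the real vector space of all functions $u:\mathcal{X}\to\mathbb{R}$ (options), with pointwise operations. For $u,v\in\mathscr{V}$, $u\le v$ iff $u(x)\le v(x)$ for all $x\in\mathcal{X}$, and $u<v$ iff $u\le v$ and $u\neq v$. Let $\mathscr{V}_{>0}=\{u\in\mathscr{V}:0<u\}$ and $\mathscr{V}^s_{>0}=\{\{u\}:u\in\mathscr{V}_{>0}\}$. Let $\mathscr{Q}$ be the set of all finite subsets of $\mathscr{V}$ (including $\emptyset$). For $A\in\mathscr{Q}$ and $u\in\mathscr{V}$, $A-u=\{v-u:v\in A\}$. For a positive integer $n$, $\mathbb{R}^{n,+}=\{\boldsymbol\lambda\in\mathbb{R}^n:\lambda_j\ge0\ \forall j,\ \sum_j\lambda_j>0\}$, and for $\boldsymbol\lambda\in\mathbb{R}^n$, $\mathbf u=(u_1,\dots,u_n)\in\mathscr{V}^n$, $\boldsymbol\lambda\mathbf u=\sum_{j=1}^n\lambda_ju_j$. A choice function is a map $C:\mathscr{Q}\to\mathscr{Q}$ with $C(A)\subseteq A$ for all $A$; its rejection function is $R_C(A)=A\setminus C(A)$, and $K_C=\{A\in\mathscr{Q}:0\notin C(A\cup\{0\})\}$. $C$ is coherent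 if: (C0) $C(A)\neq\emptyset$ for all nonempty $A\in\mathscr{Q}$; (C1) for all $A\in\mathscr{Q}$ and $u\in A$: $u\in C(A)\iff 0\in C(A-u)$; (C2) $\{u\}\in K_C$ for all $u\in\mathscr{V}_{>0}$; (C3) for all $A,B\in K_C$ and all maps $\boldsymbol\lambda:A\times B\to\mathbb{R}^{2,+}$, $\{\boldsymbol\lambda(\mathbf u)\mathbf u:\mathbf u\in A\times B\}\in K_C$; (C4) $A\subseteq B\Rightarrow R_C(A)\subseteq R_C(B)$ for all $A,B\in\mathscr{Q}$. $\mathcal{C}$ denotes the set of coherent choice functions. For a choice function $C$, $\mathcal C_C=\{C'\in\mathcal C: C'(A)\subseteq C(A)\text{ for all }A\in\mathscr{Q}\}$; $C$ is called consistent if $\mathcal C_C\neq\emptyset$; and $\mathrm{Ex}(C)(A)=\bigcup_{C'\in\mathcal C_C}C'(A)$ for all $A\in\mathscr{Q}$ (an empty union being $\emptyset$). A set of desirable option sets is any $K\subseteq\mathscr{Q}$. It is coherent if for all $A,B\in K$: (K0) $A\setminus\{0\}\in K$; (K1) $\{0\}\notin K$; (K2) $\mathscr{V}^s_{>0}\subseteq K$; (K3) $\{\boldsymbol\lambda(\mathbf u)\mathbf u:\mathbf u\in A\times B\}\in K$ for every map $\boldsymbol\lambda:A\times B\to\mathbb{R}^{2,+}$; (K4) $A\cup Q\in K$ for all $Q\in\mathscr{Q}$. $\bar{\mathbf K}$ denotes the set of coherent sets of desirable option sets. For $K\subseteq\mathscr{Q}$, the choice function $C_K$ is defined by $C_K(A)=\{u\in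 A:(A-u)\setminus\{0\}\notin K\}$. An assessment is any subset $\mathcal{A}\subseteq\mathscr{Q}$. Let $\bar{\mathbf K}(\mathcal A)=\{K\in\bar{\mathbf K}:\mathcal A\subseteq K\}$ and $\mathrm{Ex}(\mathcal A)=\bigcap\bar{\mathbf K}(\mathcal A)$, with the convention $\bigcap\emptyset=\mathscr{Q}$. For a choice function $C$, $\mathcal A_C=\{C(A)-u:A\in\mathscr{Q},\ u\in R_C(A)\}$. *)

theory Defs
  imports Complex_Main
begin

text \<open>Options are real-valued functions on a nonempty set, represented by a type 'x
(types are nonempty). Option sets in Q are finite sets of options.\<close>

type_synonym 'x opt = "'x \<Rightarrow> real"

definition Qsets :: "'x opt set set" where
  "Qsets = {A. finite A}"

definition pos_opts :: "'x opt set" where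
  "pos_opts = {u. (\<forall>x. 0 \<le> u x) \<and> u \<noteq> (\<lambda>x. 0)}"

definition shift :: "'x opt set \<Rightarrow> 'x opt \<Rightarrow> 'x opt set" where
  "shift A u = (\<lambda>v. (\<lambda>x. v x - u x)) ` A"

text \<open>Maps lambda : A x B -> R^{2,+}, given by their two coordinate functions.\<close>
definition posmap2 :: "'x opt set \<Rightarrow> 'x opt set \<Rightarrow> ('x opt \<Rightarrow> 'x opt \<Rightarrow> real)
    \<Rightarrow> ('x opt \<Rightarrow> 'x opt \<Rightarrow> real) \<Rightarrow> bool" where
  "posmap2 A B l1 l2 \<longleftrightarrow> (\<forall>u\<in>A. \<forall>v\<in>B. l1 u v \<ge> 0 \<and> l2 u v \<ge> 0 \<and> l1 u v + l2 u v > 0)"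

definition comb :: "'x opt set \<Rightarrow> 'x opt set \<Rightarrow> ('x opt \<Rightarrow> 'x opt \<Rightarrow> real)
    \<Rightarrow> ('x opt \<Rightarrow> 'x opt \<Rightarrow> real) \<Rightarrow> 'x opt set" where
  "comb A B l1 l2 = {(\<lambda>x. l1 u v * u x + l2 u v * v x) | u v. u \<in> A \<and> v \<in> B}"

text \<open>A choice function: a map Q -> Q with C(A) \<subseteq> A. Only its values on finite sets matter.\<close>
definition choice_fun :: "('x opt set \<Rightarrow> 'x opt set) \<Rightarrow> bool" where
  "choice_fun C \<longleftrightarrow> (\<forall>A\<in>Qsets. C A \<subseteq> A)"

definition rej :: "('x opt set \<Rightarrow> 'x opt set) \<Rightarrow> 'x opt set \<Rightarrow> 'x opt set" where
  "rej C A = A - C A"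

definition KC :: "('x opt set \<Rightarrow> 'x opt set) \<Rightarrow> 'x opt set set" where
  "KC C = {A\<in>Qsets. (\<lambda>x. 0) \<notin> C (A \<union> {\<lambda>x. 0})}"

definition coherent_choice :: "('x opt set \<Rightarrow> 'x opt set) \<Rightarrow> bool" where
  "coherent_choice C \<longleftrightarrow> choice_fun C \<and>
     (\<forall>A\<in>Qsets. A \<noteq> {} \<longrightarrow> C A \<noteq> {}) \<and>
     (\<forall>A\<in>Qsets. \<forall>u\<in>A. u \<in> C A \<longleftrightarrow> (\<lambda>x. 0) \<in> C (shift A u)) \<and>
     (\<forall>u\<in>pos_opts. {u} \<in> KC C) \<and>
     (\<forall>A\<in>KC C. \<forall>B\<in>KC C. \<forall>l1 l2. posmap2 A B l1 l2 \<longrightarrow> comb A B l1 l2 \<in> KC C) \<and>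
     (\<forall>A\<in>Qsets. \<forall>B\<in>Qsets. A \<subseteq> B \<longrightarrow> rej C A \<subseteq> rej C B)"

definition dominated_coherent :: "('x opt set \<Rightarrow> 'x opt set) \<Rightarrow> ('x opt set \<Rightarrow> 'x opt set) set" where
  "dominated_coherent C = {C'. coherent_choice C' \<and> (\<forall>A\<in>Qsets. C' A \<subseteq> C A)}"

definition consistent :: "('x opt set \<Rightarrow> 'x opt set) \<Rightarrow> bool" where
  "consistent C \<longleftrightarrow> dominated_coherent C \<noteq> {}"

definition ExC :: "('x opt set \<Rightarrow> 'x opt set) \<Rightarrow> 'x opt set \<Rightarrow> 'x opt set" where
  "ExC C A = (\<Union>C'\<in>dominated_coherent C. C' A)"

definition coherent_K :: "'x opt set set \<Rightarrow> bool" where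
  "coherent_K K \<longleftrightarrow> K \<subseteq> Qsets \<and>
     (\<forall>A\<in>K. A - {\<lambda>x. 0} \<in> K) \<and>
     {\<lambda>x. 0} \<notin> K \<and>
     (\<forall>u\<in>pos_opts. {u} \<in> K) \<and>
     (\<forall>A\<in>K. \<forall>B\<in>K. \<forall>l1 l2. posmap2 A B l1 l2 \<longrightarrow> comb A B l1 l2 \<in> K) \<and>
     (\<forall>A\<in>K. \<forall>Q\<in>Qsets. A \<union> Q \<in> K)"

definition CK :: "'x opt set set \<Rightarrow> 'x opt set \<Rightarrow> 'x opt set" where
  "CK K A = {u\<in>A. shift A u - {\<lambda>x. 0} \<notin> K}"

definition ExA :: "'x opt set set \<Rightarrow> 'x opt set set" where
  "ExA \<A> = Qsets \<inter> \<Inter>{K. coherent_K K \<and> \<A> \<subseteq> K}"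

definition AC :: "('x opt set \<Rightarrow> 'x opt set) \<Rightarrow> 'x opt set set" where
  "AC C = {shift (C A) u | A u. A \<in> Qsets \<and> u \<in> rej C A}"

end

theory Submission
  imports Defs
begin

lemma finite_shift: "finite A \<Longrightarrow> finite (shift A u)"
  unfolding shift_def by simp

lemma shift_mem: "v \<in> A \<Longrightarrow> (\<lambda>x. v x - u x) \<in> shift A u"
  unfolding shift_def by blast

lemma zero_in_shift_iff: "((\<lambda>x. 0) \<in> shift A u) = (u \<in> A)"
proof
  assume "(\<lambda>x. 0) \<in> shift A u"
  then obtain v where "v \<in> A" "(\<lambda>x. 0::real) = (\<lambda>x. v x - u x)" unfolding shift_def by blast
  then have "v = u" by (metis eq_iff_diff_eq_0 ext)
  then show "u \<in> A" using \<open>v \<in> A\<close> by simp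
next
  assume "u \<in> A"
  then show "(\<lambda>x. 0) \<in> shift A u" using shift_mem[of u A u] by simp
qed

lemma shift_zero: "shift A (\<lambda>x. 0) = A"
  unfolding shift_def by simp

lemma shift_union: "shift (A \<union> B) u = shift A u \<union> shift B u"
  unfolding shift_def by auto

lemma cK_sub: "coherent_K K \<Longrightarrow> K \<subseteq> Qsets"
  unfolding coherent_K_def by (elim conjE)
lemma cK_K0': "coherent_K K \<Longrightarrow> \<forall>A\<in>K. A - {\<lambda>x. 0} \<in> K"
  unfolding coherent_K_def by (elim conjE)
lemma cK_K1: "coherent_K K \<Longrightarrow> {\<lambda>x. 0} \<notin> K"
  unfolding coherent_K_def by (elim conjE)
lemma cK_K2': "coherent_K K \<Longrightarrow> \<forall>u\<in>pos_opts. {u} \<in> K"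
  unfolding coherent_K_def by (elim conjE)
lemma cK_K3': "coherent_K K \<Longrightarrow> \<forall>A\<in>K. \<forall>B\<in>K. \<forall>l1 l2. posmap2 A B l1 l2 \<longrightarrow> comb A B l1 l2 \<in> K"
  unfolding coherent_K_def by (elim conjE)
lemma cK_K4': "coherent_K K \<Longrightarrow> \<forall>A\<in>K. \<forall>Q\<in>Qsets. A \<union> Q \<in> K"
  unfolding coherent_K_def by (elim conjE)
lemma cK_K0: "coherent_K K \<Longrightarrow> A \<in> K \<Longrightarrow> A - {\<lambda>x. 0} \<in> K"
  using cK_K0' by blast
lemma cK_K3: "coherent_K K \<Longrightarrow> A \<in> K \<Longrightarrow> B \<in> K \<Longrightarrow> posmap2 A B l1 l2 \<Longrightarrow> comb A B l1 l2 \<in> K"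
  using cK_K3' by blast
lemma cK_K4: "coherent_K K \<Longrightarrow> A \<in> K \<Longrightarrow> Q \<in> Qsets \<Longrightarrow> A \<union> Q \<in> K"
  using cK_K4' by blast
lemma cK_intro: "K \<subseteq> Qsets \<Longrightarrow> \<forall>A\<in>K. A - {\<lambda>x. 0} \<in> K \<Longrightarrow> {\<lambda>x. 0} \<notin> K \<Longrightarrow>
   \<forall>u\<in>pos_opts. {u} \<in> K \<Longrightarrow> \<forall>A\<in>K. \<forall>B\<in>K. \<forall>l1 l2. posmap2 A B l1 l2 \<longrightarrow> comb A B l1 l2 \<in> K \<Longrightarrow>
   \<forall>A\<in>K. \<forall>Q\<in>Qsets. A \<union> Q \<in> K \<Longrightarrow> coherent_K K"
  unfolding coherent_K_def by (intro conjI)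

lemma empty_notin: assumes K: "coherent_K K" shows "{} \<notin> K"
proof
  assume "{} \<in> K"
  then have "{} \<union> {\<lambda>x. 0} \<in> K" using cK_K4[OF K] unfolding Qsets_def by blast
  then show False using cK_K1[OF K] by simp
qed

lemma K4: assumes K: "coherent_K K" and S: "S \<in> K" and sub: "S \<subseteq> Q" and f: "finite Q" shows "Q \<in> K"
proof -
  have "S \<union> Q \<in> K" using cK_K4[OF K S] f unfolding Qsets_def by simp
  then show ?thesis using sub by (simp add: sup.absorb2)
qed

lemma step:
  assumes K: "coherent_K K" and fin: "finite A" and wu: "w \<noteq> u"
    and S: "shift A u - {\<lambda>x. 0} \<in> K" and T: "shift A w - {\<lambda>x. 0} \<in> K"
  shows "shift (A - {w}) u - {\<lambda>x. 0} \<in> K"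
proof -
  define l1 :: "'a opt \<Rightarrow> 'a opt \<Rightarrow> real" where "l1 = (\<lambda>s t. 1)"
  define l2 :: "'a opt \<Rightarrow> 'a opt \<Rightarrow> real" where
    "l2 = (\<lambda>s t. if s = (\<lambda>x. w x - u x) then 1 else 0)"
  let ?S = "shift A u - {\<lambda>x. 0}" and ?T = "shift A w - {\<lambda>x. 0}"
  have pm: "posmap2 ?S ?T l1 l2" unfolding posmap2_def l1_def l2_def by auto
  have R: "comb ?S ?T l1 l2 \<in> K" using cK_K3[OF K S T pm] .
  have R0: "comb ?S ?T l1 l2 - {\<lambda>x. 0} \<in> K" using cK_K0[OF K R] .
  have sub: "comb ?S ?T l1 l2 - {\<lambda>x. 0} \<subseteq> shift (A - {w}) u - {\<lambda>x. 0}"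
  proof
    fix r assume r: "r \<in> comb ?S ?T l1 l2 - {\<lambda>x. 0}"
    then obtain s t where st: "s \<in> ?S" "t \<in> ?T" "r = (\<lambda>x. l1 s t * s x + l2 s t * t x)"
      unfolding comb_def by blast
    obtain a where a: "a \<in> A" "s = (\<lambda>x. a x - u x)" using st(1) unfolding shift_def by blast
    obtain b where b: "b \<in> A" "t = (\<lambda>x. b x - w x)" using st(2) unfolding shift_def by blast
    have bw: "b \<noteq> w" using st(2) b by auto
    show "r \<in> shift (A - {w}) u - {\<lambda>x. 0}"
    proof (cases "s = (\<lambda>x. w x - u x)")
      case True
      then have "r = (\<lambda>x. b x - u x)" using st(3) b unfolding l1_def l2_def by auto
      then show ?thesis using r b bw shift_mem[of b "A - {w}" u] by auto
    next
      case False
      then have "r = s" using st(3) unfolding l1_def l2_def by auto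
      moreover have "a \<noteq> w" using False a by auto
      ultimately show ?thesis using r a shift_mem[of a "A - {w}" u] by auto
    qed
  qed
  show ?thesis using K4[OF K R0 sub] fin by (simp add: finite_shift)
qed

lemma remove:
  assumes K: "coherent_K K" and E: "finite E"
  shows "\<forall>A. finite A \<longrightarrow> E \<subseteq> A \<longrightarrow> (\<forall>d\<in>E. shift A d - {\<lambda>x. 0} \<in> K) \<longrightarrow>
     (\<forall>v\<in>A - E. shift A v - {\<lambda>x. 0} \<in> K \<longrightarrow> shift (A - E) v - {\<lambda>x. 0} \<in> K)"
  using E
proof (induction E rule: finite_induct)
  case empty
  then show ?case by simp
next
  case (insert w E)
  show ?case
  proof (intro allI impI ballI)
    fix A v
    assume fA: "finite A" and sub: "insert w E \<subseteq> A"
      and hd: "\<forall>d\<in>insert w E. shift A d - {\<lambda>x. 0} \<in> K"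
      and v: "v \<in> A - insert w E" and hv: "shift A v - {\<lambda>x. 0} \<in> K"
    let ?A = "A - {w}"
    have hw: "shift A w - {\<lambda>x. 0} \<in> K" using hd by simp
    have hd': "\<forall>d\<in>E. shift ?A d - {\<lambda>x. 0} \<in> K"
      using step[OF K fA _ _ hw] hd insert.hyps(2) by (metis insert_iff)
    have hv': "shift ?A v - {\<lambda>x. 0} \<in> K" using step[OF K fA _ hv hw] v by auto
    have "shift (?A - E) v - {\<lambda>x. 0} \<in> K"
    proof -
      have "finite ?A" "E \<subseteq> ?A" "v \<in> ?A - E" using fA sub v insert.hyps(2) by auto
      then show ?thesis using insert.IH hd' hv' by blast
    qed
    moreover have "?A - E = A - insert w E" by auto
    ultimately show "shift (A - insert w E) v - {\<lambda>x. 0} \<in> K" by simp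
  qed
qed



lemma K_minus0_iff: "coherent_K K \<Longrightarrow> finite A \<Longrightarrow> (A - {\<lambda>x. 0} \<in> K) = (A \<in> K)"
  using K4[of K "A - {\<lambda>x. 0}" A] cK_K0[of K A] by blast

lemma cc_intro: "choice_fun C \<Longrightarrow> \<forall>A\<in>Qsets. A \<noteq> {} \<longrightarrow> C A \<noteq> {} \<Longrightarrow>
  \<forall>A\<in>Qsets. \<forall>u\<in>A. u \<in> C A \<longleftrightarrow> (\<lambda>x. 0) \<in> C (shift A u) \<Longrightarrow>
  \<forall>u\<in>pos_opts. {u} \<in> KC C \<Longrightarrow>
  \<forall>A\<in>KC C. \<forall>B\<in>KC C. \<forall>l1 l2. posmap2 A B l1 l2 \<longrightarrow> comb A B l1 l2 \<in> KC C \<Longrightarrow>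
  \<forall>A\<in>Qsets. \<forall>B\<in>Qsets. A \<subseteq> B \<longrightarrow> rej C A \<subseteq> rej C B \<Longrightarrow> coherent_choice C"
  unfolding coherent_choice_def by (intro conjI)

lemma KC_CK: assumes K: "coherent_K K" shows "KC (CK K) = K"
proof -
  have "\<And>A. A \<in> KC (CK K) \<longleftrightarrow> finite A \<and> A - {\<lambda>x. 0} \<in> K"
    unfolding KC_def CK_def Qsets_def by (auto simp: shift_zero)
  moreover have "\<And>A. A \<in> K \<Longrightarrow> finite A" using cK_sub[OF K] unfolding Qsets_def by blast
  ultimately show ?thesis using K_minus0_iff[OF K] by blast
qed

lemma CK_subset: "CK K A \<subseteq> A" unfolding CK_def by auto

lemma CK_nonempty:
  assumes K: "coherent_K K" and fA: "finite A" and ne: "A \<noteq> {}"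
  shows "CK K A \<noteq> {}"
proof
  assume e: "CK K A = {}"
  obtain u where u: "u \<in> A" using ne by blast
  have all: "\<forall>d\<in>A. shift A d - {\<lambda>x. 0} \<in> K" using e unfolding CK_def by blast
  have fE: "finite (A - {u})" using fA by simp
  have "shift (A - (A - {u})) u - {\<lambda>x. 0} \<in> K"
    using remove[OF K fE] fA all u by blast
  moreover have "A - (A - {u}) = {u}" using u by blast
  ultimately have "shift {u} u - {\<lambda>x. 0} \<in> K" by simp
  moreover have "shift {u} u = {\<lambda>x. 0}" unfolding shift_def by auto
  ultimately show False using empty_notin[OF K] by simp
qed

lemma CK_coherent: assumes K: "coherent_K K" shows "coherent_choice (CK K)"
proof -
  have c0: "choice_fun (CK K)" unfolding choice_fun_def using CK_subset by blast
  have c1: "\<forall>A\<in>Qsets. A \<noteq> {} \<longrightarrow> CK K A \<noteq> {}" using CK_nonempty[OF K] unfolding Qsets_def by blast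
  have c2: "\<forall>A\<in>Qsets. \<forall>u\<in>A. u \<in> CK K A \<longleftrightarrow> (\<lambda>x. 0) \<in> CK K (shift A u)"
    unfolding CK_def by (auto simp: shift_zero zero_in_shift_iff)
  have c3: "\<forall>u\<in>pos_opts. {u} \<in> KC (CK K)" using cK_K2'[OF K] unfolding KC_CK[OF K] .
  have c4: "\<forall>A\<in>KC (CK K). \<forall>B\<in>KC (CK K). \<forall>l1 l2. posmap2 A B l1 l2 \<longrightarrow> comb A B l1 l2 \<in> KC (CK K)"
    using cK_K3'[OF K] unfolding KC_CK[OF K] .
  have c5: "\<forall>A\<in>Qsets. \<forall>B\<in>Qsets. A \<subseteq> B \<longrightarrow> rej (CK K) A \<subseteq> rej (CK K) B"
  proof (intro ballI impI subsetI)
    fix A B u assume AB: "A \<in> Qsets" "B \<in> Qsets" "A \<subseteq> B" and u: "u \<in> rej (CK K) A"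
    then have uA: "u \<in> A" and h: "shift A u - {\<lambda>x. 0} \<in> K" unfolding rej_def CK_def by auto
    have "shift A u - {\<lambda>x. 0} \<subseteq> shift B u - {\<lambda>x. 0}" using AB(3) unfolding shift_def by auto
    moreover have "finite (shift B u - {\<lambda>x. 0})" using AB(2) finite_shift unfolding Qsets_def by auto
    ultimately have "shift B u - {\<lambda>x. 0} \<in> K" using K4[OF K h] by blast
    then show "u \<in> rej (CK K) B" using uA AB(3) unfolding rej_def CK_def by auto
  qed
  show ?thesis using cc_intro[OF c0 c1 c2 c3 c4 c5] .
qed

lemma cc_cf': "coherent_choice C \<Longrightarrow> choice_fun C"
  unfolding coherent_choice_def by (elim conjE)
lemma cc_C0': "coherent_choice C \<Longrightarrow> \<forall>A\<in>Qsets. A \<noteq> {} \<longrightarrow> C A \<noteq> {}"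
  unfolding coherent_choice_def by (elim conjE)
lemma cc_C1': "coherent_choice C \<Longrightarrow> \<forall>A\<in>Qsets. \<forall>u\<in>A. u \<in> C A \<longleftrightarrow> (\<lambda>x. 0) \<in> C (shift A u)"
  unfolding coherent_choice_def by (elim conjE)
lemma cc_C2: "coherent_choice C \<Longrightarrow> \<forall>u\<in>pos_opts. {u} \<in> KC C"
  unfolding coherent_choice_def by (elim conjE)
lemma cc_C3: "coherent_choice C \<Longrightarrow> \<forall>A\<in>KC C. \<forall>B\<in>KC C. \<forall>l1 l2. posmap2 A B l1 l2 \<longrightarrow> comb A B l1 l2 \<in> KC C"
  unfolding coherent_choice_def by (elim conjE)
lemma cc_C4': "coherent_choice C \<Longrightarrow> \<forall>A\<in>Qsets. \<forall>B\<in>Qsets. A \<subseteq> B \<longrightarrow> rej C A \<subseteq> rej C B"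
  unfolding coherent_choice_def by (elim conjE)
lemma cc_cf: "coherent_choice C \<Longrightarrow> A \<in> Qsets \<Longrightarrow> C A \<subseteq> A"
  using cc_cf' unfolding choice_fun_def by blast
lemma cc_C0: "coherent_choice C \<Longrightarrow> A \<in> Qsets \<Longrightarrow> A \<noteq> {} \<Longrightarrow> C A \<noteq> {}"
  using cc_C0' by blast
lemma cc_C1: "coherent_choice C \<Longrightarrow> A \<in> Qsets \<Longrightarrow> u \<in> A \<Longrightarrow> (u \<in> C A) = ((\<lambda>x. 0) \<in> C (shift A u))"
  using cc_C1' by blast
lemma cc_C4: "coherent_choice C \<Longrightarrow> A \<in> Qsets \<Longrightarrow> B \<in> Qsets \<Longrightarrow> A \<subseteq> B \<Longrightarrow> rej C A \<subseteq> rej C B"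
  using cc_C4' by blast

lemma KC_coherent: fixes C :: "'x opt set \<Rightarrow> 'x opt set" assumes C: "coherent_choice C" shows "coherent_K (KC C)"
proof -
  have k0: "KC C \<subseteq> Qsets" unfolding KC_def by auto
  have k1: "\<forall>A\<in>KC C. A - {\<lambda>x. 0} \<in> KC C"
    unfolding KC_def Qsets_def by auto
  have q0: "{\<lambda>x. 0} \<in> Qsets" unfolding Qsets_def by simp
  have "C {\<lambda>x. 0} \<noteq> {}" "C {\<lambda>x. 0} \<subseteq> {\<lambda>x. 0}"
    using cc_C0[OF C q0] cc_cf[OF C q0] by auto
  then have k2: "{\<lambda>x. 0} \<notin> KC C" unfolding KC_def by auto
  have k5: "\<forall>A\<in>KC C. \<forall>Q\<in>Qsets. A \<union> Q \<in> KC C"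
  proof (intro ballI)
    fix A Q :: "'x opt set" assume A: "A \<in> KC C" and Q: "Q \<in> Qsets"
    have fA: "finite A" using A unfolding KC_def Qsets_def by auto
    have fQ: "finite Q" using Q unfolding Qsets_def by auto
    have "(\<lambda>x. 0) \<in> rej C (A \<union> {\<lambda>x. 0})" using A unfolding KC_def rej_def by auto
    moreover have "rej C (A \<union> {\<lambda>x. 0}) \<subseteq> rej C (A \<union> Q \<union> {\<lambda>x. 0})"
      apply (rule cc_C4[OF C]) using fA fQ unfolding Qsets_def by auto
    ultimately show "A \<union> Q \<in> KC C" using fA fQ unfolding KC_def rej_def Qsets_def by auto
  qed
  show ?thesis using cK_intro[OF k0 k1 k2 cc_C2[OF C] cc_C3[OF C] k5] .
qed

lemma CK_KC: assumes C: "coherent_choice C" and A: "A \<in> Qsets" shows "CK (KC C) A = C A"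
proof
  have sub: "C A \<subseteq> A" using cc_cf[OF C A] .
  have fs: "\<And>u. finite (shift A u - {\<lambda>x. 0})" using A finite_shift unfolding Qsets_def by auto
  have eq: "\<And>u. u \<in> A \<Longrightarrow> shift A u - {\<lambda>x. 0} \<union> {\<lambda>x. 0} = shift A u"
    using zero_in_shift_iff by blast
  have ch: "\<And>u. u \<in> A \<Longrightarrow> u \<in> CK (KC C) A \<longleftrightarrow> (\<lambda>x. 0) \<in> C (shift A u)"
  proof -
    fix u assume uA: "u \<in> A"
    have "u \<in> CK (KC C) A \<longleftrightarrow> \<not> (shift A u - {\<lambda>x. 0} \<in> KC C)" using uA unfolding CK_def by simp
    also have "\<dots> \<longleftrightarrow> (\<lambda>x. 0) \<in> C (shift A u - {\<lambda>x. 0} \<union> {\<lambda>x. 0})"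
      using fs[of u] unfolding KC_def Qsets_def by simp
    finally show "u \<in> CK (KC C) A \<longleftrightarrow> (\<lambda>x. 0) \<in> C (shift A u)" using eq[OF uA] by simp
  qed
  show "CK (KC C) A \<subseteq> C A"
  proof
    fix u assume u: "u \<in> CK (KC C) A"
    then have uA: "u \<in> A" unfolding CK_def by auto
    then show "u \<in> C A" using u ch cc_C1[OF C A uA] by simp
  qed
  show "C A \<subseteq> CK (KC C) A"
  proof
    fix u assume u: "u \<in> C A"
    then have uA: "u \<in> A" using sub by auto
    then show "u \<in> CK (KC C) A" using u ch cc_C1[OF C A uA] by simp
  qed
qed

lemma CK_not: "u \<in> A \<Longrightarrow> u \<notin> CK K A \<Longrightarrow> shift A u - {\<lambda>x. 0} \<in> K"
  unfolding CK_def by simp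

lemma key:
  assumes K: "coherent_K K" and fA: "finite A" and s1: "CK K A \<subseteq> CA" and s2: "CA \<subseteq> A"
    and u: "u \<in> A - CA"
  shows "shift CA u \<in> K"
proof -
  let ?E = "A - CA - {u}"
  have fE: "finite ?E" using fA by simp
  have hE: "\<forall>d\<in>?E. shift A d - {\<lambda>x. 0} \<in> K"
  proof
    fix d assume d: "d \<in> ?E"
    then have "d \<in> A" "d \<notin> CK K A" using s1 by auto
    then show "shift A d - {\<lambda>x. 0} \<in> K" by (rule CK_not)
  qed
  have hu: "shift A u - {\<lambda>x. 0} \<in> K"
  proof -
    have "u \<in> A" "u \<notin> CK K A" using s1 u by auto
    then show ?thesis by (rule CK_not)
  qed
  have r: "finite A \<longrightarrow> ?E \<subseteq> A \<longrightarrow> (\<forall>d\<in>?E. shift A d - {\<lambda>x. 0} \<in> K) \<longrightarrow>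
     (\<forall>v\<in>A - ?E. shift A v - {\<lambda>x. 0} \<in> K \<longrightarrow> shift (A - ?E) v - {\<lambda>x. 0} \<in> K)"
    using remove[OF K fE] by (rule spec)
  have uE: "u \<in> A - ?E" using u by simp
  have EA: "?E \<subseteq> A" by (rule subsetI) simp
  have r2: "\<forall>v\<in>A - ?E. shift A v - {\<lambda>x. 0} \<in> K \<longrightarrow> shift (A - ?E) v - {\<lambda>x. 0} \<in> K"
    using r fA EA hE by (elim impE)
  have m: "shift (A - ?E) u - {\<lambda>x. 0} \<in> K" using r2 uE hu by blast
  have e1: "A - ?E = CA \<union> {u}" using s2 u by auto
  have e2: "shift (CA \<union> {u}) u - {\<lambda>x. 0} = shift CA u"
  proof -
    have "shift {u} u = {\<lambda>x. 0}" unfolding shift_def by auto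
    moreover have "(\<lambda>x. 0) \<notin> shift CA u" using u zero_in_shift_iff by blast
    ultimately show ?thesis unfolding shift_union by blast
  qed
  show ?thesis using m unfolding e1 e2 .
qed

lemma CK_dom:
  assumes cf: "choice_fun C" and K: "coherent_K K" and AK: "AC C \<subseteq> K"
  shows "CK K \<in> dominated_coherent C"
proof -
  have "\<forall>A\<in>Qsets. CK K A \<subseteq> C A"
  proof (intro ballI subsetI)
    fix A u assume A: "A \<in> Qsets" and u: "u \<in> CK K A"
    show "u \<in> C A"
    proof (rule ccontr)
      assume nu: "u \<notin> C A"
      have uA: "u \<in> A" and hu: "shift A u - {\<lambda>x. 0} \<notin> K" using u unfolding CK_def by auto
      have "shift (C A) u \<in> AC C" unfolding AC_def rej_def using A uA nu by blast
      then have inK: "shift (C A) u \<in> K" using AK by blast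
      have CA: "C A \<subseteq> A" using A cf unfolding choice_fun_def by blast
      have "shift (C A) u \<subseteq> shift A u - {\<lambda>x. 0}"
        using CA zero_in_shift_iff[of "C A" u] nu unfolding shift_def by blast
      moreover have "finite (shift A u - {\<lambda>x. 0})" using A finite_shift unfolding Qsets_def by auto
      ultimately show False using K4[OF K inK] hu by blast
    qed
  qed
  then show ?thesis unfolding dominated_coherent_def using CK_coherent[OF K] by blast
qed

lemma dom_AC:
  assumes cf: "choice_fun C" and D: "C' \<in> dominated_coherent C"
  shows "AC C \<subseteq> KC C'"
proof
  fix X assume "X \<in> AC C"
  then obtain A u where X: "X = shift (C A) u" and A: "A \<in> Qsets" and u: "u \<in> rej C A"
    unfolding AC_def by blast
  have coh: "coherent_choice C'" and dsub: "C' A \<subseteq> C A" using D A unfolding dominated_coherent_def by auto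
  have K: "coherent_K (KC C')" using KC_coherent[OF coh] .
  have CA: "C A \<subseteq> A" using A cf unfolding choice_fun_def by blast
  have "CK (KC C') A \<subseteq> C A" using CK_KC[OF coh A] dsub by simp
  moreover have "finite A" using A unfolding Qsets_def by simp
  ultimately show "X \<in> KC C'" using key[OF K _ _ CA] u X unfolding rej_def by blast
qed

lemma ExA_notin:
  assumes "X \<in> Qsets"
  shows "(X \<notin> ExA \<A>) = (\<exists>K. coherent_K K \<and> \<A> \<subseteq> K \<and> X \<notin> K)"
  using assms unfolding ExA_def by blast

theorem theorem4:
  fixes C :: "('x \<Rightarrow> real) set \<Rightarrow> ('x \<Rightarrow> real) set"
  assumes "choice_fun C"
  shows "(consistent C \<longleftrightarrow> {} \<notin> ExA (AC C)) \<and>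
         (consistent C \<longrightarrow> (\<forall>A\<in>Qsets. CK (ExA (AC C)) A = ExC C A))"
proof -
  have eQ: "({}::('x \<Rightarrow> real) set) \<in> Qsets" unfolding Qsets_def by simp
  have p1: "consistent C \<longleftrightarrow> {} \<notin> ExA (AC C)"
  proof
    assume "consistent C"
    then obtain C' where D: "C' \<in> dominated_coherent C" unfolding consistent_def by blast
    have coh: "coherent_choice C'" using D unfolding dominated_coherent_def by auto
    have K: "coherent_K (KC C')" using KC_coherent[OF coh] .
    show "{} \<notin> ExA (AC C)"
      using ExA_notin[OF eQ] K dom_AC[OF assms D] empty_notin[OF K] by blast
  next
    assume "{} \<notin> ExA (AC C)"
    then obtain K where "coherent_K K" "AC C \<subseteq> K" using ExA_notin[OF eQ] by blast
    then show "consistent C" using CK_dom[OF assms] unfolding consistent_def by blast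
  qed
  have p2: "\<forall>A\<in>Qsets. CK (ExA (AC C)) A = ExC C A"
  proof (intro ballI set_eqI)
    fix A :: "'x opt set" and u assume A: "A \<in> Qsets"
    have fs: "shift A u - {\<lambda>x. 0} \<in> Qsets" using A finite_shift unfolding Qsets_def by auto
    have "u \<in> CK (ExA (AC C)) A \<longleftrightarrow> (\<exists>K. coherent_K K \<and> AC C \<subseteq> K \<and> u \<in> CK K A)"
      unfolding CK_def using ExA_notin[OF fs] by auto
    also have "\<dots> \<longleftrightarrow> u \<in> ExC C A"
    proof
      assume "\<exists>K. coherent_K K \<and> AC C \<subseteq> K \<and> u \<in> CK K A"
      then obtain K where "coherent_K K" "AC C \<subseteq> K" "u \<in> CK K A" by blast
      then show "u \<in> ExC C A" using CK_dom[OF assms] unfolding ExC_def by blast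
    next
      assume "u \<in> ExC C A"
      then obtain C' where D: "C' \<in> dominated_coherent C" and u: "u \<in> C' A" unfolding ExC_def by blast
      have coh: "coherent_choice C'" using D unfolding dominated_coherent_def by auto
      show "\<exists>K. coherent_K K \<and> AC C \<subseteq> K \<and> u \<in> CK K A"
        using KC_coherent[OF coh] dom_AC[OF assms D] CK_KC[OF coh A] u by auto
    qed
    finally show "u \<in> CK (ExA (AC C)) A \<longleftrightarrow> u \<in> ExC C A" .
  qed
  show ?thesis using p1 p2 by blast
qed

end
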